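(* For all $k\in\mathbb N_+$ and $T\ge0$, $$v(k,T)\ \ge\ \sum_{n<k-1}F\Big(\frac{k}{n+1}\Big)\,\mathbb P(N(T)=n)+kF(1)\,\mathbb P(N(T)\ge k-1).$$
   Context: Let $\lambda>0$ and let $N$ be a Poisson process with intensity $\lambda$, arrival times $0<\sigma_1<\sigma_2<\cdots$, and natural filtration $\mathcal F_t=\sigma(N_s:s\le t)$. Let $F:[0,\infty)\to[0,\infty)$ be strictly increasing and strictly convex with $F(0)=0$. For $k\in\{0,1,\dots\}$ let $\mathcal A_k$ be the set of $(\mathcal F_t)$-adapted, integer-valued, nonnegative, non-increasing processes $\xi$ with $\xi_0=k$ whose values change only at arrival times of $N$, and $v(k,T)=\inf_{\xi\in\mathcal A_k}\mathbb E[\sum_{i:\sigma_i\le T}F(\xi_{\sigma_i-}-\xi_{\sigma_i})+F(\xi_T)]$. *)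

theory Defs
  imports "HOL-Probability.Probability"
begin

definition strictly_convex_on :: "real set \<Rightarrow> (real \<Rightarrow> real) \<Rightarrow> bool" where
  "strictly_convex_on S f \<longleftrightarrow> (\<forall>x\<in>S. \<forall>y\<in>S. \<forall>u::real. x \<noteq> y \<and> 0 < u \<and> u < 1 \<longrightarrow>
      f (u * x + (1 - u) * y) < u * f x + (1 - u) * f y)"

text \<open>Canonical Poisson process of intensity l: the sample point is the sequence of
  i.i.d. Exp(l) interarrival times.\<close>
definition poisson_space :: "real \<Rightarrow> (nat \<Rightarrow> real) measure" where
  "poisson_space l = PiM UNIV (\<lambda>_. density lborel (exponential_density l))"

text \<open>arrival i = sigma_(i+1), the (i+1)-th arrival time.\<close>
definition arrival :: "nat \<Rightarrow> (nat \<Rightarrow> real) \<Rightarrow> real" where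
  "arrival i \<omega> = (\<Sum>j\<le>i. \<omega> j)"

definition count_proc :: "real \<Rightarrow> (nat \<Rightarrow> real) \<Rightarrow> nat" where
  "count_proc t \<omega> = card {i. arrival i \<omega> \<le> t}"

definition nat_filtration :: "real \<Rightarrow> real \<Rightarrow> (nat \<Rightarrow> real) measure" where
  "nat_filtration l t = sigma (space (poisson_space l))
     {count_proc s -` A \<inter> space (poisson_space l) | s A. 0 \<le> s \<and> s \<le> t}"

definition admissible :: "real \<Rightarrow> nat \<Rightarrow> (real \<Rightarrow> (nat \<Rightarrow> real) \<Rightarrow> nat) \<Rightarrow> bool" where
  "admissible l k \<xi> \<longleftrightarrow>
     (\<forall>t\<ge>0. \<xi> t \<in> measurable (nat_filtration l t) (count_space UNIV)) \<and>
     (\<forall>\<omega>\<in>space (poisson_space l). \<xi> 0 \<omega> = k) \<and>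
     (\<forall>\<omega>\<in>space (poisson_space l). \<forall>s t. 0 \<le> s \<and> s \<le> t \<longrightarrow> \<xi> t \<omega> \<le> \<xi> s \<omega>) \<and>
     (\<forall>\<omega>\<in>space (poisson_space l). \<forall>s t. 0 \<le> s \<and> s < t \<and> \<xi> s \<omega> \<noteq> \<xi> t \<omega> \<longrightarrow>
         (\<exists>i. s < arrival i \<omega> \<and> arrival i \<omega> \<le> t))"

text \<open>Pathwise cost; the left limit xi_(sigma-) is taken literally.\<close>
definition cost :: "(real \<Rightarrow> real) \<Rightarrow> real \<Rightarrow> (real \<Rightarrow> (nat \<Rightarrow> real) \<Rightarrow> nat) \<Rightarrow> (nat \<Rightarrow> real) \<Rightarrow> real" where
  "cost F T \<xi> \<omega> =
     (\<Sum>i\<in>{i. arrival i \<omega> \<le> T}.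
        F (Lim (at_left (arrival i \<omega>)) (\<lambda>s. real (\<xi> s \<omega>)) - real (\<xi> (arrival i \<omega>) \<omega>)))
     + F (real (\<xi> T \<omega>))"

definition value_fn :: "(real \<Rightarrow> real) \<Rightarrow> real \<Rightarrow> nat \<Rightarrow> real \<Rightarrow> ennreal" where
  "value_fn F l k T = (INF \<xi>\<in>{\<xi>. admissible l k \<xi>}.
       \<integral>\<^sup>+ \<omega>. ennreal (cost F T \<xi> \<omega>) \<partial>(poisson_space l))"

end

theory Submission
  imports Defs
begin


lemma erlang_CDF_tendsto:
  assumes "l > 0" "T \<ge> 0"
  shows "(\<lambda>n. erlang_CDF n l T) \<longlonglongrightarrow> 0"
proof -
  have "(\<lambda>n. (l*T)^n /\<^sub>R fact n) sums exp (l*T)" by (rule exp_converges)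
  then have "(\<lambda>n. \<Sum>i<n. (l*T)^i / fact i) \<longlonglongrightarrow> exp (l*T)"
    by (simp add: sums_def divide_inverse_commute scaleR_conv_of_real)
  then have "(\<lambda>n. \<Sum>i<Suc n. (l*T)^i / fact i) \<longlonglongrightarrow> exp (l*T)"
    by (rule LIMSEQ_Suc)
  then have "(\<lambda>n. \<Sum>i\<le>n. (l*T)^i / fact i) \<longlonglongrightarrow> exp (l*T)"
    by (simp add: lessThan_Suc_atMost)
  then have "(\<lambda>n. 1 - exp (- (l * T)) * (\<Sum>i\<le>n. (l*T)^i / fact i)) \<longlonglongrightarrow> 1 - exp (- (l * T)) * exp (l*T)"
    by (intro tendsto_intros)
  moreover have "1 - exp (- (l * T)) * exp (l*T) = 0" by (simp add: exp_minus)
  moreover have "erlang_CDF n l T = 1 - exp (- (l * T)) * (\<Sum>i\<le>n. (l*T)^i / fact i)" for n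
    using assms unfolding erlang_CDF_def by (simp add: sum_distrib_left algebra_simps)
  ultimately show ?thesis by simp
qed

lemma ae_good:
  assumes l: "l > 0" and T: "T \<ge> 0"
  shows "AE \<omega> in poisson_space l. (\<forall>j. \<omega> j > 0) \<and> (\<exists>n. arrival n \<omega> > T)"
proof -
  define D where "D = density lborel (exponential_density l)"
  have pD: "prob_space D" unfolding D_def by (rule prob_space_exponential_density[OF l])
  interpret product_prob_space "\<lambda>_. D" UNIV by (rule product_prob_spaceI) (simp add: pD)
  have M: "poisson_space l = PiM UNIV (\<lambda>_. D)" by (simp add: poisson_space_def D_def)
  have sD: "sets D = sets borel" by (simp add: D_def)
  have "AE x in D. x > 0"
  proof -
    have "AE x in lborel. 0 < ennreal (exponential_density l x) \<longrightarrow> x > 0"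
      using AE_lborel_singleton[of 0]
      by eventually_elim (auto simp: exponential_density_def split: if_splits)
    then show ?thesis unfolding D_def
      by (subst AE_density) (auto simp: exponential_density_def)
  qed
  have A1: "AE \<omega> in PiM UNIV (\<lambda>_. D). \<forall>j::nat. \<omega> j > 0"
  unfolding AE_all_countable proof (intro allI)
    fix j :: nat
    show "AE \<omega> in PiM UNIV (\<lambda>_. D). \<omega> j > 0"
      by (rule AE_component[where P="\<lambda>x. x > 0"]) (use \<open>AE x in D. x > 0\<close> in auto)
  qed
  have indD: "indep_vars (\<lambda>_. D) (\<lambda>(i::nat) \<omega>. \<omega> i) UNIV"
  proof (subst indep_vars_iff_distr_eq_PiM')
    show "distr (Pi\<^sub>M UNIV (\<lambda>_. D)) (Pi\<^sub>M UNIV (\<lambda>_. D)) (\<lambda>x. \<lambda>i\<in>UNIV. x i) =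
      Pi\<^sub>M UNIV (\<lambda>i::nat. distr (Pi\<^sub>M UNIV (\<lambda>_. D)) D (\<lambda>\<omega>. \<omega> i))"
    proof -
      have "(\<lambda>x. restrict x UNIV) = (\<lambda>x::nat\<Rightarrow>real. x)" by (simp add: restrict_def)
      then show ?thesis by (simp add: PiM_component)
    qed
  qed auto
  have ind: "indep_vars (\<lambda>_. borel) (\<lambda>(i::nat) \<omega>. \<omega> i) UNIV"
    using indD unfolding indep_vars_def2 by (simp add: sD measurable_cong_sets[OF refl sD])
  have dist: "distributed (PiM UNIV (\<lambda>_. D)) lborel (\<lambda>\<omega>. \<omega> i) (exponential_density l)" for i :: nat
  proof -
    have "distr (PiM UNIV (\<lambda>_. D)) lborel (\<lambda>\<omega>. \<omega> i) = distr (PiM UNIV (\<lambda>_. D)) D (\<lambda>\<omega>. \<omega> i)"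
      by (rule distr_cong) (auto simp: sD)
    also have "\<dots> = D" by (simp add: PiM_component)
    finally show ?thesis unfolding distributed_def D_def by simp
  qed
  have rv[measurable]: "(\<lambda>x. x i) \<in> borel_measurable (PiM UNIV (\<lambda>_. D))" for i :: nat
  proof -
    have "(\<lambda>x. x i) \<in> measurable (PiM UNIV (\<lambda>_. D)) D" by (rule measurable_component_singleton) simp
    then show ?thesis by (simp add: measurable_cong_sets[OF refl sD])
  qed
  have er: "prob {\<omega>\<in>space (PiM UNIV (\<lambda>_. D)). arrival n \<omega> \<le> T} = erlang_CDF n l T" for n
  proof -
    have "distributed (PiM UNIV (\<lambda>_. D)) lborel (\<lambda>x. \<Sum>i\<in>{..n}. x i) (erlang_density (card {..n} - 1) l)"
      by (rule exponential_distributed_sum[OF _ _ l dist indep_vars_subset[OF ind]]) (use rv in \<open>auto simp: measurable_def\<close>)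
    then have "distributed (PiM UNIV (\<lambda>_. D)) lborel (\<lambda>x. arrival n x) (erlang_density n l)"
      by (simp add: arrival_def[abs_def])
    from erlang_distributed_le[OF this l T] show ?thesis .
  qed
  let ?E = "{\<omega>\<in>space (PiM UNIV (\<lambda>_. D)). \<forall>n. arrival n \<omega> \<le> T}"
  have Em: "?E \<in> sets (PiM UNIV (\<lambda>_. D))"
    unfolding arrival_def by measurable
  have "prob ?E \<le> erlang_CDF n l T" for n
  proof -
    have "prob ?E \<le> prob {\<omega>\<in>space (PiM UNIV (\<lambda>_. D)). arrival n \<omega> \<le> T}"
      by (rule finite_measure_mono) (auto simp: arrival_def)
    then show ?thesis using er by simp
  qed
  then have "prob ?E \<le> 0"
    by (intro LIMSEQ_le_const[OF erlang_CDF_tendsto[OF l T]]) auto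
  then have "prob ?E = 0" by (simp add: measure_le_0_iff)
  then have A2: "AE \<omega> in PiM UNIV (\<lambda>_. D). \<exists>n. arrival n \<omega> > T"
    using Em by (intro AE_I[where N="?E"]) (auto simp: emeasure_eq_measure not_less)
  show ?thesis unfolding M using A1 A2 by eventually_elim auto
qed


lemma F_mono:
  fixes x y :: real
  assumes "strict_mono_on {0..} F" "0 \<le> x" "x \<le> y"
  shows "F x \<le> (F y :: real)"
  using strict_mono_onD[OF assms(1), of x y] assms by (cases "x = y") auto

lemma F_lin:
  assumes F0: "F 0 = 0" and Fc: "strictly_convex_on {0..} F"
  shows "real d * F 1 \<le> F (real d)"
proof (cases "d \<le> 1")
  case True
  then have "d = 0 \<or> d = 1" by auto
  then show ?thesis using F0 by auto
next
  case False
  then have d: "real d > 1" by simp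
  define u where "u = 1 / real d"
  have u: "0 < u" "u < 1" using d by (auto simp: u_def)
  have "F (u * real d + (1 - u) * 0) < u * F (real d) + (1 - u) * F 0"
    using Fc[unfolded strictly_convex_on_def, rule_format, of "real d" 0 u] u d by simp
  moreover have "u * real d + (1 - u) * 0 = 1" using d by (simp add: u_def)
  ultimately have "F 1 < F (real d) / real d" using F0 by (simp add: u_def)
  then show ?thesis using d by (simp add: field_simps)
qed

lemma tele:
  "(\<forall>i<m. y (Suc i) \<le> y i) \<Longrightarrow> (\<Sum>i<m. y i - y (Suc i)) + y m = (y 0 :: nat)"
proof (induction m)
  case 0 then show ?case by simp
next
  case (Suc m)
  then have "(\<Sum>i<m. y i - y (Suc i)) + y m = y 0" by auto
  moreover have "y (Suc m) \<le> y m" using Suc.prems by auto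
  ultimately show ?case by simp
qed

lemma comb:
  fixes y :: "nat \<Rightarrow> nat" and F :: "real \<Rightarrow> real"
  assumes mono: "\<forall>i<m. y (Suc i) \<le> y i" and y0: "y 0 = k"
    and Fnn: "\<forall>x\<ge>0. F x \<ge> 0" and Fm: "strict_mono_on {0..} F"
    and Fc: "strictly_convex_on {0..} F" and F0: "F 0 = 0"
  shows "F (real k / real (m+1)) \<le> (\<Sum>i<m. F (real (y i) - real (y (Suc i)))) + F (real (y m))"
    and "real k * F 1 \<le> (\<Sum>i<m. F (real (y i) - real (y (Suc i)))) + F (real (y m))"
proof -
  define p where "p i = (if i < m then y i - y (Suc i) else y m)" for i
  have "(\<Sum>i<m. F (real (y i) - real (y (Suc i)))) = (\<Sum>i<m. F (real (p i)))"
    using mono by (intro sum.cong) (auto simp: p_def of_nat_diff)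
  then have eq: "(\<Sum>i<m. F (real (y i) - real (y (Suc i)))) + F (real (y m)) = (\<Sum>i\<le>m. F (real (p i)))"
    by (simp add: lessThan_Suc_atMost[symmetric] p_def)
  have "(\<Sum>i<m. p i) = (\<Sum>i<m. y i - y (Suc i))" by (intro sum.cong) (auto simp: p_def)
  then have sp: "(\<Sum>i\<le>m. p i) = k"
    using tele[OF mono] y0 by (simp add: lessThan_Suc_atMost[symmetric] p_def)
  then have spr: "(\<Sum>i\<le>m. real (p i)) = real k" by (metis of_nat_sum)
  show "F (real k / real (m+1)) \<le> (\<Sum>i<m. F (real (y i) - real (y (Suc i)))) + F (real (y m))"
  proof -
    obtain j where j: "j \<le> m" "real k / real (m+1) \<le> real (p j)"
    proof (rule ccontr)
      assume "\<not> thesis"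
      with that have lt: "\<forall>j\<in>{..m}. real (p j) < real k / real (m+1)" by force
      have "(\<Sum>i\<le>m. real (p i)) < (\<Sum>i\<le>m. real k / real (m+1))"
        by (rule sum_strict_mono) (use lt in auto)
      also have "\<dots> = real k" by simp
      finally show False using spr by simp
    qed
    have "F (real k / real (m+1)) \<le> F (real (p j))"
      by (rule F_mono[OF Fm]) (use j in auto)
    also have "\<dots> \<le> (\<Sum>i\<le>m. F (real (p i)))"
      by (rule member_le_sum) (use j Fnn in auto)
    finally show ?thesis using eq by simp
  qed
  show "real k * F 1 \<le> (\<Sum>i<m. F (real (y i) - real (y (Suc i)))) + F (real (y m))"
  proof -
    have "real k * F 1 = (\<Sum>i\<le>m. real (p i) * F 1)" by (simp only: sum_distrib_right[symmetric] spr)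
    also have "\<dots> \<le> (\<Sum>i\<le>m. F (real (p i)))"
      by (rule sum_mono) (rule F_lin[OF F0 Fc])
    finally show ?thesis using eq by simp
  qed
qed


lemma pathwise:
  fixes F :: "real \<Rightarrow> real"
  assumes adm: "admissible l k \<xi>" and om: "\<omega> \<in> space (poisson_space l)"
    and pos: "\<forall>j. \<omega> j > 0" and ex: "\<exists>n. arrival n \<omega> > T" and T: "T \<ge> 0"
    and Fnn: "\<forall>x\<ge>0. F x \<ge> 0" and Fm: "strict_mono_on {0..} F"
    and Fc: "strictly_convex_on {0..} F" and F0: "F 0 = 0"
  shows "(if count_proc T \<omega> < k - 1 then F (real k / real (count_proc T \<omega> + 1)) else real k * F 1)
           \<le> cost F T \<xi> \<omega>"
proof -
  define a where "a i = arrival i \<omega>" for i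
  have a_suc: "a (Suc i) = a i + \<omega> (Suc i)" for i by (simp add: a_def arrival_def)
  have sm: "strict_mono a" unfolding strict_mono_Suc_iff using pos a_suc by simp
  have a_lt: "i < j \<Longrightarrow> a i < a j" for i j using sm by (simp add: strict_mono_less)
  have a_le: "i \<le> j \<Longrightarrow> a i \<le> a j" for i j using sm by (simp add: strict_mono_less_eq)
  have a0: "a 0 > 0" using pos by (simp add: a_def arrival_def)
  have a_pos: "a i > 0" for i using a0 a_le[of 0 i] by simp
  define m where "m = (LEAST n. T < a n)"
  have "\<exists>n. T < a n" using ex by (simp add: a_def)
  then have Tm: "T < a m" unfolding m_def by (rule LeastI_ex)
  have ltm: "i < m \<Longrightarrow> a i \<le> T" for i using not_less_Least[of i "\<lambda>n. T < a n"] by (simp add: m_def not_less)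
  have S: "{i. arrival i \<omega> \<le> T} = {..<m}"
  proof safe
    fix i assume "arrival i \<omega> \<le> T"
    then show "i < m" using Tm a_le[of m i] by (auto simp: a_def not_less[symmetric])
  next
    fix i assume "i < m" then show "arrival i \<omega> \<le> T" using ltm by (simp add: a_def)
  qed
  have cnt: "count_proc T \<omega> = m" by (simp add: count_proc_def S)
  note A = adm[unfolded admissible_def]
  have xi0: "\<xi> 0 \<omega> = k" using conjunct1[OF conjunct2[OF A]] om by blast
  have ximono: "\<And>s t. 0 \<le> s \<Longrightarrow> s \<le> t \<Longrightarrow> \<xi> t \<omega> \<le> \<xi> s \<omega>"
    using conjunct1[OF conjunct2[OF conjunct2[OF A]]] om by blast
  have xichg: "\<And>s t. 0 \<le> s \<Longrightarrow> s < t \<Longrightarrow> \<xi> s \<omega> \<noteq> \<xi> t \<omega> \<Longrightarrow> \<exists>i. s < a i \<and> a i \<le> t"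
    using conjunct2[OF conjunct2[OF conjunct2[OF A]]] om unfolding a_def by blast
  have const: "\<xi> t \<omega> = \<xi> s \<omega>" if h0: "0 \<le> s" and h1: "s \<le> t" and h2: "\<forall>j. \<not> (s < a j \<and> a j \<le> t)" for s t
  proof (rule ccontr)
    assume ne: "\<xi> t \<omega> \<noteq> \<xi> s \<omega>"
    then have "s < t" using h1 by (cases "s = t") auto
    then obtain j where "s < a j \<and> a j \<le> t" using xichg[of s t] h0 ne by metis
    then show False using h2 by blast
  qed
  define y where "y i = (if i = 0 then k else \<xi> (a (i - 1)) \<omega>)" for i
  define p where "p i = (if i = 0 then 0 else a (i - 1))" for i
  have p_nn: "0 \<le> p i" for i using a_pos by (simp add: p_def less_imp_le)
  have p_lt: "p i < a i" for i using a_pos a_lt[of "i - 1" i] by (auto simp: p_def)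
  have p_y: "\<xi> (p i) \<omega> = y i" for i by (simp add: p_def y_def xi0)
  have flat: "\<xi> s \<omega> = y i" if "p i \<le> s" "s < a i" for s i
  proof -
    have "\<xi> s \<omega> = \<xi> (p i) \<omega>"
    proof (rule const)
      show "0 \<le> p i" by (rule p_nn)
      show "p i \<le> s" by fact
      show "\<forall>j. \<not> (p i < a j \<and> a j \<le> s)"
      proof (intro allI notI)
        fix j assume j: "p i < a j \<and> a j \<le> s"
        then have "a j < a i" using that by simp
        then have ji: "j < i" using a_le[of i j] by (cases "i \<le> j") auto
        then have "a j \<le> a (i - 1)" using a_le[of j "i - 1"] by simp
        then show False using j ji by (simp add: p_def)
      qed
    qed
    then show ?thesis using p_y by simp
  qed
  have lim: "Lim (at_left (a i)) (\<lambda>s. real (\<xi> s \<omega>)) = real (y i)" for i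
  proof (rule tendsto_Lim)
    show "\<not> trivial_limit (at_left (a i))" by simp
    have "eventually (\<lambda>s. s \<in> {p i<..<a i}) (at_left (a i))"
      by (rule eventually_at_left_real[OF p_lt])
    then have "eventually (\<lambda>s. real (\<xi> s \<omega>) = real (y i)) (at_left (a i))"
      by eventually_elim (auto intro: flat)
    then show "((\<lambda>s. real (\<xi> s \<omega>)) \<longlongrightarrow> real (y i)) (at_left (a i))"
      by (rule tendsto_eventually)
  qed
  have termv: "\<xi> T \<omega> = y m"
  proof (cases "m = 0")
    case True
    have "\<xi> T \<omega> = \<xi> 0 \<omega>"
    proof (rule const)
      show "\<forall>j. \<not> (0 < a j \<and> a j \<le> T)" using S True by (auto simp: a_def)
    qed (use T in auto)
    then show ?thesis using True by (simp add: y_def xi0)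
  next
    case False
    have "\<xi> T \<omega> = \<xi> (a (m - 1)) \<omega>"
    proof (rule const)
      show "0 \<le> a (m - 1)" using a_pos less_imp_le by blast
      show "a (m - 1) \<le> T" using ltm False by simp
      show "\<forall>j. \<not> (a (m - 1) < a j \<and> a j \<le> T)"
      proof (intro allI notI)
        fix j assume j: "a (m - 1) < a j \<and> a j \<le> T"
        then have "j < m" using S by (auto simp: a_def)
        then have "a j \<le> a (m - 1)" using a_le[of j "m - 1"] by simp
        then show False using j by simp
      qed
    qed
    then show ?thesis using False by (simp add: y_def)
  qed
  have ymono: "\<forall>i<m. y (Suc i) \<le> y i"
  proof (intro allI impI)
    fix i assume "i < m"
    have "\<xi> (a i) \<omega> \<le> \<xi> (p i) \<omega>" by (rule ximono) (use p_nn p_lt less_imp_le in auto)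
    then show "y (Suc i) \<le> y i" using p_y by (simp add: y_def)
  qed
  have costeq: "cost F T \<xi> \<omega> = (\<Sum>i<m. F (real (y i) - real (y (Suc i)))) + F (real (y m))"
    unfolding cost_def S termv
    by (intro arg_cong2[where f="(+)"] sum.cong refl) (simp add: lim[unfolded a_def] y_def a_def)
  have y0: "y 0 = k" by (simp add: y_def)
  note c = comb[OF ymono y0 Fnn Fm Fc F0]
  show ?thesis unfolding costeq cnt using c by simp
qed


lemma prob_space_poisson: "l > 0 \<Longrightarrow> prob_space (poisson_space l)"
proof -
  assume l: "l > 0"
  define D where "D = density lborel (exponential_density l)"
  have pD: "prob_space D" unfolding D_def by (rule prob_space_exponential_density[OF l])
  interpret product_prob_space "\<lambda>_. D" UNIV by (rule product_prob_spaceI) (simp add: pD)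
  show ?thesis unfolding poisson_space_def D_def[symmetric] by (rule P.prob_space_axioms)
qed

theorem lemma2p1:
  fixes F :: "real \<Rightarrow> real" and l T :: real and k :: nat
  assumes "l > 0"
    and "\<forall>x\<ge>0. F x \<ge> 0"
    and "strict_mono_on {0..} F"
    and "strictly_convex_on {0..} F"
    and "F 0 = 0"
    and "k \<ge> 1"
    and "T \<ge> 0"
  shows "value_fn F l k T \<ge> ennreal
     ((\<Sum>n<k-1. F (real k / real (n+1)) *
          measure (poisson_space l) {\<omega>\<in>space (poisson_space l). count_proc T \<omega> = n})
      + real k * F 1 *
          measure (poisson_space l) {\<omega>\<in>space (poisson_space l). count_proc T \<omega> \<ge> k-1})"
proof -
  note l = assms(1) and Fnn = assms(2) and Fm = assms(3) and Fc = assms(4) and F0 = assms(5) and T = assms(7)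
  define M where "M = poisson_space l"
  interpret prob_space M unfolding M_def by (rule prob_space_poisson[OF l])
  define A where "A n = {\<omega>\<in>space M. count_proc T \<omega> = n}" for n
  define B where "B = {\<omega>\<in>space M. count_proc T \<omega> \<ge> k-1}"
  define cut where "cut X = (if X \<in> sets M then X else {})" for X
  have cut_sets: "cut X \<in> sets M" for X by (simp add: cut_def)
  have cut_sub: "cut X \<subseteq> X" for X by (simp add: cut_def)
  have cut_meas: "measure M (cut X) = measure M X" for X
    by (simp add: cut_def measure_notin_sets)
  define c where "c n = F (real k / real (n+1))" for n
  define cB where "cB = real k * F 1"
  have c_nn: "c n \<ge> 0" for n using Fnn by (simp add: c_def)
  have cB_nn: "cB \<ge> 0" using Fnn by (simp add: cB_def)
  define h where "h \<omega> = (\<Sum>n<k-1. c n * indicator (cut (A n)) \<omega>) + cB * indicator (cut B) \<omega>" for \<omega>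
  have h_nn: "h \<omega> \<ge> 0" for \<omega> unfolding h_def using c_nn cB_nn
    by (intro add_nonneg_nonneg sum_nonneg mult_nonneg_nonneg) auto
  have ind: "integrable M (indicator (cut X) :: _ \<Rightarrow> real)" for X
    by (rule integrable_real_indicator[OF cut_sets]) (simp add: less_top[symmetric])
  have i1: "integrable M (\<lambda>\<omega>. c n * indicator (cut (A n)) \<omega>)" for n
    by (rule integrable_mult_right) (rule ind)
  have i2: "integrable M (\<lambda>\<omega>. \<Sum>n<k-1. c n * indicator (cut (A n)) \<omega>)"
    by (rule Bochner_Integration.integrable_sum) (rule i1)
  have i3: "integrable M (\<lambda>\<omega>. cB * indicator (cut B) \<omega>)"
    by (rule integrable_mult_right) (rule ind)
  have int_h: "integrable M h" unfolding h_def
    by (rule Bochner_Integration.integrable_add[OF i2 i3])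
  have ih: "integral\<^sup>L M h = (\<Sum>n<k-1. c n * measure M (A n)) + cB * measure M B"
  proof -
    have "integral\<^sup>L M h = (\<Sum>n<k-1. c n * measure M (cut (A n))) + cB * measure M (cut B)"
      unfolding h_def
      by (simp only: Bochner_Integration.integral_add[OF i2 i3] Bochner_Integration.integral_sum[OF i1]
          Bochner_Integration.integral_mult_right_zero Bochner_Integration.integral_indicator
          sets.Int_space_eq2[OF cut_sets])
    then show ?thesis by (simp add: cut_meas)
  qed
  show ?thesis
    unfolding value_fn_def
  proof (rule INF_greatest)
    fix \<xi> assume "\<xi> \<in> {\<xi>. admissible l k \<xi>}"
    then have adm: "admissible l k \<xi>" by simp
    have "ennreal ((\<Sum>n<k-1. c n * measure M (A n)) + cB * measure M B) = (\<integral>\<^sup>+\<omega>. ennreal (h \<omega>) \<partial>M)"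
      using nn_integral_eq_integral[OF int_h] h_nn ih by simp
    also have "\<dots> \<le> (\<integral>\<^sup>+\<omega>. ennreal (cost F T \<xi> \<omega>) \<partial>M)"
    proof (rule nn_integral_mono_AE)
      show "AE \<omega> in M. ennreal (h \<omega>) \<le> ennreal (cost F T \<xi> \<omega>)"
        using ae_good[OF l T] unfolding M_def[symmetric]
      proof (rule AE_mp, intro AE_I2 impI)
        fix \<omega> assume om: "\<omega> \<in> space M" and g: "(\<forall>j. 0 < \<omega> j) \<and> (\<exists>n. T < arrival n \<omega>)"
        define m where "m = count_proc T \<omega>"
        have "h \<omega> \<le> (\<Sum>n<k-1. c n * indicator (A n) \<omega>) + cB * indicator B \<omega>"
          unfolding h_def using c_nn cB_nn cut_sub
          by (intro add_mono sum_mono mult_left_mono) (auto simp: indicator_def)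
        also have "\<dots> = (if m < k - 1 then c m else cB)"
        proof -
          have "(\<Sum>n<k-1. c n * indicator (A n) \<omega>) = (\<Sum>n<k-1. if n = m then c n else 0)"
            using om by (intro sum.cong) (auto simp: A_def m_def indicator_def)
          also have "\<dots> = (if m < k - 1 then c m else 0)" by (simp add: sum.delta)
          finally show ?thesis using om by (auto simp: B_def m_def indicator_def)
        qed
        also have "\<dots> \<le> cost F T \<xi> \<omega>"
          using pathwise[OF adm om[unfolded M_def] conjunct1[OF g] conjunct2[OF g] T Fnn Fm Fc F0]
          by (simp only: c_def cB_def m_def)
        finally show "ennreal (h \<omega>) \<le> ennreal (cost F T \<xi> \<omega>)" by (rule ennreal_leI)
      qed
    qed
    finally show "ennreal ((\<Sum>n<k-1. F (real k / real (n+1)) *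
          measure (poisson_space l) {\<omega>\<in>space (poisson_space l). count_proc T \<omega> = n})
      + real k * F 1 *
          measure (poisson_space l) {\<omega>\<in>space (poisson_space l). count_proc T \<omega> \<ge> k-1})
      \<le> (\<integral>\<^sup>+\<omega>. ennreal (cost F T \<xi> \<omega>) \<partial>poisson_space l)"
      by (simp add: M_def A_def B_def c_def cB_def)
  qed
qed

end
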